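(* The relation $\{(c(\alpha),c(\beta),c(\gamma)) \text{ padded with } 0 : \alpha,\beta,\gamma<\omega^\omega,\ \alpha+\beta=\gamma\}$ — more precisely, the set of triples of equal-length words over $\omega$ forming the components of $c(\alpha,\beta,\gamma)$ for ordinals $\alpha,\beta,\gamma<\omega^\omega$ with $\alpha+\beta=\gamma$ (ordinal addition) — is $(\omega;+)$-recognizable.
   Context: Ordinal encoding: every ordinal $0<\alpha<\omega^\omega$ can be written uniquely as $\alpha=\sum_{i=m}^{0}\omega^i a_i=\omega^m a_m+\cdots+\omega^0a_0$ with $a_i<\omega$ and $a_m\ne0$; put $c(\alpha)=a_0a_1\cdots a_m\in\omega^*$ (a word over the infinite alphabet $\omega$), and $c(0)=\varepsilon$. For ordinals $\alpha_1,\dots,\alpha_n<\omega^\omega$, $c(\alpha_1,\dots,\alpha_n)$ is the $n$-tuple of words obtained by right-padding each $c(\alpha_j)$ with the symbol $0$ to the common length $\max_j|c(\alpha_j)|$ (equivalently a single word over $\omega^n$). Recognizability: let $\mathfrak M=(\omega;+)$ with $+$ the ternary graph of addition, $\mathfrak L=\{+\}$. Let $\#\notin\omega$ and $\mathfrak M_\#$ the $\{+,P_\#\}$-structure with domain $\omega\cup\{\#\}$, $+$ as in $\mathfrak M$, $P_\#(x)$ iff $x=\#$. For $w=(w_1,\dots,w_n)\in(\omega^* )^n$, $\langle w\rangle$ is the word over $(\omega\cup\{\#\})^n$ of length $\max_i|w_i|$ obtained by right-padding each $w_i$ with $\#$ and reading in parallel. An $\mathfrak M$-automaton with $n$ tapes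 is $(Q,n,E,I,T)$ with $Q$ finite, $I,T\subseteq Q$, and a finite set $E\subseteq Q\times\mathcal F_n\times Q$, $\mathcal F_n$ the first-order $\{+,P_\#\}$-formulas with $n$ free variables; $w$ is accepted if, writing $\langle w\rangle=u_0\cdots u_{m-1}$, there are states $q_0\in I,\dots,q_m\in T$ such that for each $i<m$ some $(q_i,\varphi,q_{i+1})\in E$ satisfies $\mathfrak M_\#\models\varphi(u_i)$. A relation $X\subseteq(\omega^* )^n$ is $(\omega;+)$-recognizable if it is the set of tuples accepted by some such automaton. *)

theory Defs
  imports Main
begin

text \<open>An ordinal alpha < omega^omega, alpha = omega^m a_m + ... + omega^0 a_0 with a_m > 0,
  is represented by its code c(alpha) = a_0 a_1 ... a_m, a list of naturals whose last
  entry is nonzero; c(0) is the empty list.\<close>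

definition is_code :: "nat list \<Rightarrow> bool" where
  "is_code xs \<longleftrightarrow> xs = [] \<or> last xs \<noteq> 0"

definition coef :: "nat list \<Rightarrow> nat \<Rightarrow> nat" where
  "coef xs i = (if i < length xs then xs ! i else 0)"

text \<open>Ordinal addition on codes (standard Cantor normal form rule):
  if beta = 0 then alpha + beta = alpha; otherwise, with m the degree of beta,
  alpha + beta = sum_{i>m} omega^i a_i + omega^m (a_m + b_m) + sum_{i<m} omega^i b_i.\<close>

definition ord_add :: "nat list \<Rightarrow> nat list \<Rightarrow> nat list" where
  "ord_add a b =
     (if b = [] then a
      else (let m = length b - 1 in
            map (\<lambda>i. if i < m then b ! i
                      else if i = m then coef a m + b ! m
                      else a ! i) [0..<max (length a) (length b)]))"

definition pad0 :: "nat \<Rightarrow> nat list \<Rightarrow> nat list" where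
  "pad0 L xs = xs @ replicate (L - length xs) 0"

definition AddRel :: "nat list list set" where
  "AddRel = {[pad0 L a, pad0 L b, pad0 L c] | a b c L.
       is_code a \<and> is_code b \<and> is_code c \<and> ord_add a b = c \<and>
       L = max (length a) (max (length b) (length c))}"

text \<open>Variables are natural numbers. The domain of M_# is omega \<union> {#}, modelled as
  nat option with None = #.\<close>

datatype fm =
    FAdd nat nat nat
  | FHash nat
  | FEq nat nat
  | FNeg fm
  | FConj fm fm
  | FEx nat fm

fun sat :: "(nat \<Rightarrow> nat option) \<Rightarrow> fm \<Rightarrow> bool" where
  "sat e (FAdd x y z) = (\<exists>a b c. e x = Some a \<and> e y = Some b \<and> e z = Some c \<and> a + b = c)"
| "sat e (FHash x) = (e x = None)"
| "sat e (FEq x y) = (e x = e y)"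
| "sat e (FNeg \<phi>) = (\<not> sat e \<phi>)"
| "sat e (FConj \<phi> \<psi>) = (sat e \<phi> \<and> sat e \<psi>)"
| "sat e (FEx v \<phi>) = (\<exists>d. sat (e(v := d)) \<phi>)"

fun fv :: "fm \<Rightarrow> nat set" where
  "fv (FAdd x y z) = {x, y, z}"
| "fv (FHash x) = {x}"
| "fv (FEq x y) = {x, y}"
| "fv (FNeg \<phi>) = fv \<phi>"
| "fv (FConj \<phi> \<psi>) = fv \<phi> \<union> fv \<psi>"
| "fv (FEx v \<phi>) = fv \<phi> - {v}"

definition sat_letter :: "nat option list \<Rightarrow> fm \<Rightarrow> bool" where
  "sat_letter u \<phi> = sat (\<lambda>i. if i < length u then u ! i else None) \<phi>"

definition conv_len :: "nat list list \<Rightarrow> nat" where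
  "conv_len w = Max (set (0 # map length w))"

definition conv :: "nat list list \<Rightarrow> nat option list list" where
  "conv w = map (\<lambda>i. map (\<lambda>x. if i < length x then Some (x ! i) else None) w) [0..<conv_len w]"

text \<open>An (omega;+)-automaton with n tapes: states are natural numbers (Q is the finite set of
  states occurring in E, I, T), E a finite set of transitions labelled by formulas with free
  variables among the first n.\<close>

definition accepts ::
  "(nat \<times> fm \<times> nat) set \<Rightarrow> nat set \<Rightarrow> nat set \<Rightarrow> nat list list \<Rightarrow> bool" where
  "accepts E I T w \<longleftrightarrow>
     (let u = conv w in
      \<exists>qs. length qs = length u + 1 \<and> qs ! 0 \<in> I \<and> qs ! length u \<in> T \<and>
           (\<forall>i < length u. \<exists>\<phi>. (qs ! i, \<phi>, qs ! Suc i) \<in> E \<and> sat_letter (u ! i) \<phi>))"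

definition M_recognizable :: "nat \<Rightarrow> nat list list set \<Rightarrow> bool" where
  "M_recognizable n X \<longleftrightarrow>
     (\<exists>E I T. finite E \<and> finite I \<and> finite T \<and>
        (\<forall>(p, \<phi>, q) \<in> E. fv \<phi> \<subseteq> {..<n}) \<and>
        X = {w. length w = n \<and> accepts E I T w})"

end

theory Submission
  imports Defs
begin


definition strip :: "nat list \<Rightarrow> nat list" where
  "strip x = rev (dropWhile (\<lambda>n. n = 0) (rev x))"

lemma strip_ex: "\<exists>k. x = strip x @ replicate k 0"
proof -
  let ?P = "\<lambda>n::nat. n = 0"
  have r: "rev x = takeWhile ?P (rev x) @ dropWhile ?P (rev x)" by simp
  have "\<forall>y\<in>set (takeWhile ?P (rev x)). y = 0" by (meson set_takeWhileD)
  then have "replicate (length (takeWhile ?P (rev x))) 0 = takeWhile ?P (rev x)"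
    by (rule replicate_length_same)
  then have "rev x = replicate (length (takeWhile ?P (rev x))) 0 @ dropWhile ?P (rev x)"
    using r by simp
  then have "rev (rev x) = rev (dropWhile ?P (rev x)) @ replicate (length (takeWhile ?P (rev x))) 0"
    by (metis rev_append rev_replicate)
  then show ?thesis unfolding strip_def by auto
qed

lemma strip_code: "is_code (strip x)"
proof (cases "dropWhile (\<lambda>n. n = 0) (rev x) = []")
  case True then show ?thesis by (simp add: strip_def is_code_def)
next
  case False
  then have "hd (dropWhile (\<lambda>n. n = 0) (rev x)) \<noteq> 0" using hd_dropWhile by blast
  then show ?thesis using False by (simp add: strip_def is_code_def last_rev)
qed

lemma strip_len: "length (strip x) \<le> length x"
  unfolding strip_def by (metis length_dropWhile_le length_rev)

lemma coef_strip: "coef (strip x) i = (if i < length x then x ! i else 0)"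
proof -
  obtain k where k: "x = strip x @ replicate k 0" using strip_ex by blast
  show ?thesis
    unfolding coef_def
    by (subst (2 3) k) (auto simp: nth_append)
qed

lemma code_eq: assumes "is_code p" "is_code q" "\<And>i. coef p i = coef q i" shows "p = q"
proof -
  have L: "length p = length q"
  proof (rule ccontr)
    assume "length p \<noteq> length q"
    then consider "length p < length q" | "length q < length p" by linarith
    then show False
    proof cases
      case 1
      then have "q \<noteq> []" by auto
      then have "last q \<noteq> 0" using assms(2) is_code_def by auto
      moreover have "last q = coef q (length q - 1)" using \<open>q \<noteq> []\<close> by (simp add: coef_def last_conv_nth)
      moreover have "\<not> (length q - 1 < length p)" using 1 by linarith
      then have "coef p (length q - 1) = 0" by (simp add: coef_def)
      ultimately show False using assms(3) by metis
    next
      case 2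
      then have "p \<noteq> []" by auto
      then have "last p \<noteq> 0" using assms(1) is_code_def by auto
      moreover have "last p = coef p (length p - 1)" using \<open>p \<noteq> []\<close> by (simp add: coef_def last_conv_nth)
      moreover have "\<not> (length p - 1 < length q)" using 2 by linarith
      then have "coef q (length p - 1) = 0" by (simp add: coef_def)
      ultimately show False using assms(3) by metis
    qed
  qed
  show ?thesis
  proof (rule nth_equalityI[OF L])
    fix i assume "i < length p"
    then show "p ! i = q ! i" using assms(3)[of i] L by (simp add: coef_def)
  qed
qed

lemma strip_unique: assumes "is_code a" shows "strip (a @ replicate k 0) = a"
proof (rule code_eq[OF strip_code assms])
  fix i show "coef (strip (a @ replicate k 0)) i = coef a i"
    unfolding coef_strip by (auto simp: coef_def nth_append)
qed

lemma ord_add_len: "length (ord_add a b) = (if b = [] then length a else max (length a) (length b))"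
  by (simp add: ord_add_def Let_def)

lemma coef_ord_add: assumes "b \<noteq> []"
  shows "coef (ord_add a b) i = (if i < length b - 1 then coef b i else if i = length b - 1 then coef a i + coef b i else coef a i)"
proof (cases "i < max (length a) (length b)")
  case True
  then show ?thesis using assms by (auto simp: ord_add_def Let_def coef_def)
next
  case False
  then have "coef (ord_add a b) i = 0" using assms by (simp add: coef_def ord_add_len)
  moreover have "\<not> i < length a" using False by simp
  then have "coef a i = 0" by (simp add: coef_def)
  moreover have "\<not> i < length b - 1" "i \<noteq> length b - 1" using False assms by (auto simp: neq_Nil_conv)
  ultimately show ?thesis by simp
qed

lemma ord_add_code: assumes "is_code a" "is_code b" shows "is_code (ord_add a b)"
proof (cases "b = []")
  case True then show ?thesis using assms by (simp add: ord_add_def)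
next
  case False
  let ?n = "max (length a) (length b)"
  have n: "length (ord_add a b) = ?n" using False by (simp add: ord_add_len)
  have "last (ord_add a b) = coef (ord_add a b) (?n - 1)"
  proof -
    have "ord_add a b \<noteq> []" using n False by auto
    moreover have "?n - 1 < ?n" using False by (cases b) auto
    ultimately show ?thesis using n by (simp add: coef_def last_conv_nth)
  qed
  also have "\<dots> \<noteq> 0"
  proof -
    have lb: "last b \<noteq> 0" "last b = b ! (length b - 1)" using assms(2) False by (auto simp: is_code_def last_conv_nth)
    show ?thesis
    proof (cases "?n - 1 = length b - 1")
      case True then show ?thesis using coef_ord_add[OF False] lb False by (simp add: coef_def)
    next
      case F: False
      then have la: "length a = ?n" "length b < length a" using False by auto
      then have "a \<noteq> []" by auto
      then have "last a \<noteq> 0" "last a = a ! (length a - 1)" using assms(1) by (auto simp: is_code_def last_conv_nth)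
      moreover have "coef (ord_add a b) (?n-1) = coef a (?n-1)"
        using coef_ord_add[OF False, of a "?n-1"] F la by auto
      moreover have "coef a (length a - 1) = a ! (length a - 1)" using \<open>a \<noteq> []\<close> by (simp add: coef_def)
      ultimately show ?thesis using la by simp
    qed
  qed
  finally show ?thesis by (simp add: is_code_def)
qed



fun accf :: "(nat \<times> fm \<times> nat) set \<Rightarrow> nat set \<Rightarrow> nat \<Rightarrow> nat option list list \<Rightarrow> bool" where
  "accf E T q [] = (q \<in> T)"
| "accf E T q (u # us) = (\<exists>\<phi> q'. (q, \<phi>, q') \<in> E \<and> sat_letter u \<phi> \<and> accf E T q' us)"

lemma run_iff:
  "(\<exists>qs. length qs = length us + 1 \<and> qs ! 0 = q \<and> qs ! length us \<in> T \<and>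
      (\<forall>i<length us. \<exists>\<phi>. (qs ! i, \<phi>, qs ! Suc i) \<in> E \<and> sat_letter (us ! i) \<phi>))
   \<longleftrightarrow> accf E T q us"
proof (induction us arbitrary: q)
  case Nil
  show ?case
  proof
    assume "\<exists>qs. length qs = length [] + 1 \<and> qs ! 0 = q \<and> qs ! length [] \<in> T \<and>
      (\<forall>i<length ([]::nat option list list). \<exists>\<phi>. (qs ! i, \<phi>, qs ! Suc i) \<in> E \<and> sat_letter ([] ! i) \<phi>)"
    then show "accf E T q []" by auto
  next
    assume "accf E T q []"
    then show "\<exists>qs. length qs = length [] + 1 \<and> qs ! 0 = q \<and> qs ! length [] \<in> T \<and>
      (\<forall>i<length ([]::nat option list list). \<exists>\<phi>. (qs ! i, \<phi>, qs ! Suc i) \<in> E \<and> sat_letter ([] ! i) \<phi>)"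
      by (intro exI[of _ "[q]"]) auto
  qed
next
  case (Cons u us)
  show ?case
  proof
    assume "\<exists>qs. length qs = length (u # us) + 1 \<and> qs ! 0 = q \<and> qs ! length (u # us) \<in> T \<and>
      (\<forall>i<length (u # us). \<exists>\<phi>. (qs ! i, \<phi>, qs ! Suc i) \<in> E \<and> sat_letter ((u # us) ! i) \<phi>)"
    then obtain qs where qs: "length qs = length (u # us) + 1" "qs ! 0 = q" "qs ! length (u # us) \<in> T"
      "\<forall>i<length (u # us). \<exists>\<phi>. (qs ! i, \<phi>, qs ! Suc i) \<in> E \<and> sat_letter ((u # us) ! i) \<phi>" by blast
    define qs' where "qs' = tl qs"
    have qsc: "qs = q # qs'" using qs(1,2) unfolding qs'_def by (cases qs) auto
    obtain \<phi> where \<phi>: "(q, \<phi>, qs' ! 0) \<in> E" "sat_letter u \<phi>" using qs(4)[rule_format, of 0] qsc by auto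
    have "accf E T (qs' ! 0) us"
      unfolding Cons.IH[symmetric]
    proof (intro exI[of _ qs'] conjI allI impI)
      show "length qs' = length us + 1" using qs(1) qsc by simp
      show "qs' ! 0 = qs' ! 0" by simp
      show "qs' ! length us \<in> T" using qs(3) qsc by simp
      fix i assume "i < length us"
      then show "\<exists>\<phi>. (qs' ! i, \<phi>, qs' ! Suc i) \<in> E \<and> sat_letter (us ! i) \<phi>"
        using qs(4)[rule_format, of "Suc i"] qsc by simp
    qed
    then show "accf E T q (u # us)" using \<phi> by auto
  next
    assume "accf E T q (u # us)"
    then obtain \<phi> q' where h: "(q, \<phi>, q') \<in> E" "sat_letter u \<phi>" "accf E T q' us" by auto
    from h(3)[unfolded Cons.IH[symmetric]] obtain qs where qs: "length qs = length us + 1" "qs ! 0 = q'"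
      "qs ! length us \<in> T" "\<forall>i<length us. \<exists>\<phi>. (qs ! i, \<phi>, qs ! Suc i) \<in> E \<and> sat_letter (us ! i) \<phi>"
      by blast
    show "\<exists>qs. length qs = length (u # us) + 1 \<and> qs ! 0 = q \<and> qs ! length (u # us) \<in> T \<and>
      (\<forall>i<length (u # us). \<exists>\<phi>. (qs ! i, \<phi>, qs ! Suc i) \<in> E \<and> sat_letter ((u # us) ! i) \<phi>)"
    proof (intro exI[of _ "q # qs"] conjI allI impI)
      show "length (q # qs) = length (u # us) + 1" using qs by simp
      show "(q # qs) ! 0 = q" by simp
      show "(q # qs) ! length (u # us) \<in> T" using qs by simp
      fix i assume i: "i < length (u # us)"
      show "\<exists>\<phi>. ((q # qs) ! i, \<phi>, (q # qs) ! Suc i) \<in> E \<and> sat_letter ((u # us) ! i) \<phi>"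
      proof (cases i)
        case 0 then show ?thesis using h(1,2) qs(2) by (intro exI[of _ \<phi>]) simp
      next
        case (Suc j)
        then have "j < length us" using i by simp
        then show ?thesis using qs(4) Suc by simp
      qed
    qed
  qed
qed

lemma accepts_iff: "accepts E I T w \<longleftrightarrow> (\<exists>q\<in>I. accf E T q (conv w))"
proof
  assume "accepts E I T w"
  then obtain qs where qs: "length qs = length (conv w) + 1" "qs ! 0 \<in> I" "qs ! length (conv w) \<in> T"
      "\<forall>i<length (conv w). \<exists>\<phi>. (qs ! i, \<phi>, qs ! Suc i) \<in> E \<and> sat_letter (conv w ! i) \<phi>"
    unfolding accepts_def Let_def by blast
  have "accf E T (qs ! 0) (conv w)"
    unfolding run_iff[symmetric] using qs by blast
  then show "\<exists>q\<in>I. accf E T q (conv w)" using qs(2) by blast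
next
  assume "\<exists>q\<in>I. accf E T q (conv w)"
  then obtain q where q: "q \<in> I" "accf E T q (conv w)" by blast
  from q(2)[unfolded run_iff[symmetric]] obtain qs where qs: "length qs = length (conv w) + 1" "qs ! 0 = q" "qs ! length (conv w) \<in> T"
      "\<forall>i<length (conv w). \<exists>\<phi>. (qs ! i, \<phi>, qs ! Suc i) \<in> E \<and> sat_letter (conv w ! i) \<phi>"
    by blast
  show "accepts E I T w" unfolding accepts_def Let_def using qs q(1) by blast
qed

definition "Nn v = FEx 3 (FAdd v v 3)"
definition "Zr v = FAdd v v v"
definition "NZ v = FConj (Nn v) (FNeg (Zr v))"
definition "fA = FConj (FConj (Nn 0) (Nn 1)) (FEq 2 1)"
definition "fB = FConj (FAdd 0 1 2) (NZ 1)"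
definition "fR = FConj (FConj (Zr 1) (Nn 0)) (FEq 2 0)"
definition "fRN = FConj fR (NZ 0)"

definition "EE = {(0::nat, fA, 0::nat), (0, fB, 5), (5, fR, 2), (5, fRN, 3), (2, fR, 2), (2, fRN, 3)}"
definition "II = {0::nat, 2, 4}"
definition "TT = {5::nat, 3, 4}"

definition "isA u = (\<exists>a b. u = [Some a, Some b, Some b])"
definition "isB u = (\<exists>a b. b \<noteq> 0 \<and> u = [Some a, Some b, Some (a + b)])"
definition "isR u = (\<exists>a. u = [Some a, Some 0, Some a])"
definition "isRN u = (\<exists>a. a \<noteq> 0 \<and> u = [Some a, Some 0, Some a])"

lemma len3: "length u = 3 \<Longrightarrow> \<exists>p q r. u = [p, q, r]"
  by (auto simp: numeral_3_eq_3 length_Suc_conv)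

lemma sA: "length u = 3 \<Longrightarrow> sat_letter u fA \<longleftrightarrow> isA u"
  by (drule len3) (auto simp: sat_letter_def fA_def Nn_def isA_def)
lemma sB: "length u = 3 \<Longrightarrow> sat_letter u fB \<longleftrightarrow> isB u"
  by (drule len3) (auto simp: sat_letter_def fB_def NZ_def Zr_def Nn_def isB_def)
lemma sR: "length u = 3 \<Longrightarrow> sat_letter u fR \<longleftrightarrow> isR u"
  by (drule len3) (auto simp: sat_letter_def fR_def Zr_def Nn_def isR_def)
lemma sRN: "length u = 3 \<Longrightarrow> sat_letter u fRN \<longleftrightarrow> isRN u"
  by (drule len3) (auto simp: sat_letter_def fRN_def fR_def NZ_def Zr_def Nn_def isRN_def)

lemma fv_ok: "\<forall>(p, \<phi>, q) \<in> EE. fv \<phi> \<subseteq> {..<3}"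
  by (auto simp: EE_def fA_def fB_def fR_def fRN_def NZ_def Zr_def Nn_def)



lemma acc3: "accf EE TT 3 us \<longleftrightarrow> us = []"
  by (cases us) (auto simp: EE_def TT_def)

lemma EE0: "(0, \<phi>, q') \<in> EE \<longleftrightarrow> (\<phi> = fA \<and> q' = 0) \<or> (\<phi> = fB \<and> q' = 5)"
  by (auto simp: EE_def)
lemma EE1: "(5, \<phi>, q') \<in> EE \<longleftrightarrow> (\<phi> = fR \<and> q' = 2) \<or> (\<phi> = fRN \<and> q' = 3)"
  by (auto simp: EE_def)
lemma EE2: "(2, \<phi>, q') \<in> EE \<longleftrightarrow> (\<phi> = fR \<and> q' = 2) \<or> (\<phi> = fRN \<and> q' = 3)"
  by (auto simp: EE_def)

lemma acc_step2: "accf EE TT 2 (u # us) \<longleftrightarrow> (sat_letter u fR \<and> accf EE TT 2 us) \<or> (sat_letter u fRN \<and> us = [])"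
proof -
  have "accf EE TT 2 (u # us) \<longleftrightarrow> (\<exists>\<phi> q'. ((\<phi> = fR \<and> q' = 2) \<or> (\<phi> = fRN \<and> q' = 3)) \<and> sat_letter u \<phi> \<and> accf EE TT q' us)"
    by (simp only: accf.simps(2) EE2)
  also have "\<dots> \<longleftrightarrow> (sat_letter u fR \<and> accf EE TT 2 us) \<or> (sat_letter u fRN \<and> accf EE TT 3 us)" by blast
  finally show ?thesis by (simp only: acc3)
qed

lemma acc_step1: "accf EE TT 5 (u # us) \<longleftrightarrow> (sat_letter u fR \<and> accf EE TT 2 us) \<or> (sat_letter u fRN \<and> us = [])"
proof -
  have "accf EE TT 5 (u # us) \<longleftrightarrow> (\<exists>\<phi> q'. ((\<phi> = fR \<and> q' = 2) \<or> (\<phi> = fRN \<and> q' = 3)) \<and> sat_letter u \<phi> \<and> accf EE TT q' us)"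
    by (simp only: accf.simps(2) EE1)
  also have "\<dots> \<longleftrightarrow> (sat_letter u fR \<and> accf EE TT 2 us) \<or> (sat_letter u fRN \<and> accf EE TT 3 us)" by blast
  finally show ?thesis by (simp only: acc3)
qed

lemma acc_step0: "accf EE TT 0 (u # us) \<longleftrightarrow> (sat_letter u fA \<and> accf EE TT 0 us) \<or> (sat_letter u fB \<and> accf EE TT 5 us)"
  by (simp only: accf.simps(2) EE0) auto

lemma acc4: "accf EE TT 4 us \<longleftrightarrow> us = []"
  by (cases us) (auto simp: EE_def TT_def)

lemma RN_R: "isRN u \<Longrightarrow> isR u" by (auto simp: isRN_def isR_def)

lemma acc2: "\<forall>u\<in>set us. length u = 3 \<Longrightarrow>
  accf EE TT 2 us \<longleftrightarrow> (us \<noteq> [] \<and> (\<forall>u\<in>set us. isR u) \<and> isRN (last us))"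
proof (induction us)
  case Nil then show ?case by (simp add: TT_def)
next
  case (Cons u us)
  have u: "length u = 3" using Cons.prems by simp
  have IH: "accf EE TT 2 us \<longleftrightarrow> (us \<noteq> [] \<and> (\<forall>u\<in>set us. isR u) \<and> isRN (last us))"
    using Cons by simp
  show ?case
    unfolding acc_step2 sR[OF u] sRN[OF u] IH
    using RN_R by (cases "us = []") auto
qed

lemma acc1: "accf EE TT 5 us \<longleftrightarrow> us = [] \<or> accf EE TT 2 us"
proof (cases us)
  case Nil then show ?thesis by (simp add: TT_def)
next
  case (Cons a l) then show ?thesis by (simp only: acc_step1 acc_step2) simp
qed

lemma acc0: "\<forall>u\<in>set us. length u = 3 \<Longrightarrow>
  accf EE TT 0 us \<longleftrightarrow> (\<exists>p l r. us = p @ l # r \<and> (\<forall>x\<in>set p. isA x) \<and> isB l \<and> (r = [] \<or> accf EE TT 2 r))"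
proof (induction us)
  case Nil then show ?case by (simp add: TT_def)
next
  case (Cons u us)
  have u: "length u = 3" using Cons.prems by simp
  have IH: "accf EE TT 0 us \<longleftrightarrow> (\<exists>p l r. us = p @ l # r \<and> (\<forall>x\<in>set p. isA x) \<and> isB l \<and> (r = [] \<or> accf EE TT 2 r))"
    using Cons by simp
  show ?case
  proof
    assume "accf EE TT 0 (u # us)"
    then consider "isA u" "accf EE TT 0 us" | "isB u" "accf EE TT 5 us"
      unfolding acc_step0 sA[OF u] sB[OF u] by blast
    then show "\<exists>p l r. u # us = p @ l # r \<and> (\<forall>x\<in>set p. isA x) \<and> isB l \<and> (r = [] \<or> accf EE TT 2 r)"
    proof cases
      case 1
      then obtain p l r where "us = p @ l # r" "\<forall>x\<in>set p. isA x" "isB l" "r = [] \<or> accf EE TT 2 r"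
        using IH by blast
      then show ?thesis using 1 by (intro exI[of _ "u # p"] exI[of _ l] exI[of _ r]) simp
    next
      case 2
      then show ?thesis using acc1 by (intro exI[of _ "[]"] exI[of _ u] exI[of _ us]) simp
    qed
  next
    assume "\<exists>p l r. u # us = p @ l # r \<and> (\<forall>x\<in>set p. isA x) \<and> isB l \<and> (r = [] \<or> accf EE TT 2 r)"
    then obtain p l r where h: "u # us = p @ l # r" "\<forall>x\<in>set p. isA x" "isB l" "r = [] \<or> accf EE TT 2 r" by blast
    show "accf EE TT 0 (u # us)"
    proof (cases p)
      case Nil
      then have "u = l" "us = r" using h(1) by auto
      then show ?thesis unfolding acc_step0 sA[OF u] sB[OF u] using h acc1 by simp
    next
      case (Cons p0 p')
      then have "u = p0" "us = p' @ l # r" using h(1) by auto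
      then have "isA u" "accf EE TT 0 us" using h Cons IH by auto
      then show ?thesis unfolding acc_step0 sA[OF u] sB[OF u] by simp
    qed
  qed
qed



definition CondB :: "nat list \<Rightarrow> nat list \<Rightarrow> nat list \<Rightarrow> nat \<Rightarrow> bool" where
  "CondB x y z L \<longleftrightarrow> (\<exists>m<L. (\<forall>i<m. z ! i = y ! i) \<and> y ! m \<noteq> 0 \<and> z ! m = x ! m + y ! m \<and>
     (\<forall>i. m < i \<and> i < L \<longrightarrow> y ! i = 0 \<and> z ! i = x ! i) \<and>
     (m = L - 1 \<or> (y ! (L - 1) = 0 \<and> z ! (L - 1) = x ! (L - 1) \<and> x ! (L - 1) \<noteq> 0)))"

definition CondC :: "nat list \<Rightarrow> nat list \<Rightarrow> nat list \<Rightarrow> nat \<Rightarrow> bool" where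
  "CondC x y z L \<longleftrightarrow> 0 < L \<and> (\<forall>i<L. y ! i = 0 \<and> z ! i = x ! i) \<and>
     (y ! (L - 1) = 0 \<and> z ! (L - 1) = x ! (L - 1) \<and> x ! (L - 1) \<noteq> 0)"

lemma pad_len: "length a \<le> L \<Longrightarrow> length (pad0 L a) = L"
  by (simp add: pad0_def)

lemma pad_nth: "length a \<le> L \<Longrightarrow> i < L \<Longrightarrow> pad0 L a ! i = coef a i"
  by (auto simp: pad0_def coef_def nth_append)

lemma pad_strip: "pad0 (length x) (strip x) = x"
proof -
  obtain k where k: "x = strip x @ replicate k 0" using strip_ex by blast
  then have "length x - length (strip x) = k" by (metis add_diff_cancel_left' length_append length_replicate)
  then show ?thesis unfolding pad0_def using k by simp
qed

lemma strip_full: "x \<noteq> [] \<Longrightarrow> last x \<noteq> 0 \<Longrightarrow> strip x = x"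
  using strip_unique[of x 0] by (simp add: is_code_def)

lemma last_coef: "a \<noteq> [] \<Longrightarrow> last a = coef a (length a - 1)"
  by (simp add: coef_def last_conv_nth)

lemma addrel_fwd:
  assumes "[x, y, z] \<in> AddRel" "length x = L"
  shows "length y = L \<and> length z = L \<and> (L = 0 \<or> CondB x y z L \<or> CondC x y z L)"
proof -
  obtain a b c L' where h: "[x, y, z] = [pad0 L' a, pad0 L' b, pad0 L' c]" "is_code a" "is_code b" "is_code c"
    "ord_add a b = c" "L' = max (length a) (max (length b) (length c))"
    using assms(1) unfolding AddRel_def by blast
  have la: "length a \<le> L'" "length b \<le> L'" "length c \<le> L'" using h(6) by auto
  have xyz: "x = pad0 L' a" "y = pad0 L' b" "z = pad0 L' c" using h(1) by auto
  then have LL: "L' = L" using pad_len[OF la(1)] assms(2) by simp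
  have lens: "length y = L" "length z = L" using xyz pad_len la LL by auto
  have X: "\<And>i. i < L \<Longrightarrow> x ! i = coef a i" using xyz(1) pad_nth la(1) LL by simp
  have Y: "\<And>i. i < L \<Longrightarrow> y ! i = coef b i" using xyz(2) pad_nth la(2) LL by simp
  have Z: "\<And>i. i < L \<Longrightarrow> z ! i = coef c i" using xyz(3) pad_nth la(3) LL by simp
  have "L = 0 \<or> CondB x y z L \<or> CondC x y z L"
  proof (cases "b = []")
    case True
    then have ca: "c = a" using h(5) by (simp add: ord_add_def)
    then have La: "L = length a" using h(6) LL True by simp
    show ?thesis
    proof (cases "L = 0")
      case False
      then have "a \<noteq> []" using La by auto
      then have "last a \<noteq> 0" using h(2) by (simp add: is_code_def)
      then have "x ! (L - 1) \<noteq> 0" using X[of "L-1"] False La last_coef[OF \<open>a \<noteq> []\<close>] by simp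
      moreover have "\<forall>i<L. y ! i = 0 \<and> z ! i = x ! i" using X Y Z True ca by (simp add: coef_def)
      ultimately have "CondC x y z L" unfolding CondC_def using False by simp
      then show ?thesis by simp
    qed simp
  next
    case False
    define m where "m = length b - 1"
    have "length (ord_add a b) = max (length a) (length b)" using False by (simp add: ord_add_len)
    then have lc: "length c = max (length a) (length b)" using h(5) by simp
    then have LM: "L = max (length a) (length b)" using h(6) LL by simp
    have mL: "m < L" using False LM m_def by (cases b) auto
    have lb: "last b \<noteq> 0" using h(3) False by (simp add: is_code_def)
    have cb: "coef b m \<noteq> 0" using lb last_coef[OF False] m_def by simp
    have co: "\<And>i. coef c i = (if i < m then coef b i else if i = m then coef a i + coef b i else coef a i)"
    proof -
      fix i show "coef c i = (if i < m then coef b i else if i = m then coef a i + coef b i else coef a i)"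
        using coef_ord_add[OF False, of a i] h(5) unfolding m_def by simp
    qed
    have "CondB x y z L" unfolding CondB_def
    proof (intro exI[of _ m] conjI allI impI)
      show "m < L" by (rule mL)
      fix i assume "i < m" then show "z ! i = y ! i" using X Y Z co mL by simp
    next
      show "y ! m \<noteq> 0" using Y mL cb by simp
      show "z ! m = x ! m + y ! m" using X Y Z co mL by simp
    next
      fix i assume i: "m < i \<and> i < L"
      then have "\<not> i < length b" using m_def by linarith
      then have "coef b i = 0" by (simp add: coef_def)
      then show "y ! i = 0" using Y i by simp
      show "z ! i = x ! i" using X Z co i by simp
    next
      show "m = L - 1 \<or> y ! (L - 1) = 0 \<and> z ! (L - 1) = x ! (L - 1) \<and> x ! (L - 1) \<noteq> 0"
      proof (cases "m = L - 1")
        case F: False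
        then have mi: "m < L - 1" using mL by simp
        then have aL: "length a = L" "length b < L" using LM m_def by auto
        then have "a \<noteq> []" using mL by auto
        then have "last a \<noteq> 0" using h(2) by (simp add: is_code_def)
        then have "x ! (L - 1) \<noteq> 0" using X[of "L-1"] aL last_coef[OF \<open>a \<noteq> []\<close>] mL by simp
        moreover have "\<not> L - 1 < length b" using aL by linarith
        then have "coef b (L - 1) = 0" by (simp add: coef_def)
        ultimately show ?thesis using X Y Z co mi by simp
      qed simp
    qed
    then show ?thesis by simp
  qed
  then show ?thesis using lens by simp
qed

lemma addrel_bwd:
  assumes "length x = L" "length y = L" "length z = L" "L = 0 \<or> CondB x y z L \<or> CondC x y z L"
  shows "[x, y, z] \<in> AddRel"
proof -
  define a where "a = strip x"
  define b where "b = strip y"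
  define c where "c = strip z"
  have codes: "is_code a" "is_code b" "is_code c" unfolding a_def b_def c_def by (rule strip_code)+
  have pads: "pad0 L a = x" "pad0 L b = y" "pad0 L c = z"
    unfolding a_def b_def c_def using pad_strip assms(1-3) by metis+
  have lens: "length a \<le> L" "length b \<le> L" "length c \<le> L"
    unfolding a_def b_def c_def using strip_len assms(1-3) by metis+
  have ca: "\<And>i. coef a i = (if i < L then x ! i else 0)" unfolding a_def using coef_strip assms(1) by simp
  have cb: "\<And>i. coef b i = (if i < L then y ! i else 0)" unfolding b_def using coef_strip assms(2) by simp
  have cc: "\<And>i. coef c i = (if i < L then z ! i else 0)" unfolding c_def using coef_strip assms(3) by simp
  have main: "ord_add a b = c \<and> L = max (length a) (max (length b) (length c))"
    using assms(4)
  proof (elim disjE)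
    assume "L = 0"
    then have "a = []" "b = []" "c = []" using lens by auto
    then show ?thesis using \<open>L = 0\<close> by (simp add: ord_add_def)
  next
    assume "CondC x y z L"
    then have C: "0 < L" "\<forall>i<L. y ! i = 0 \<and> z ! i = x ! i" "x ! (L - 1) \<noteq> 0" unfolding CondC_def by auto
    have "b = []" by (rule code_eq[OF codes(2)]) (use cb C(2) in \<open>auto simp: coef_def is_code_def\<close>)
    moreover have "c = a" by (rule code_eq[OF codes(3,1)]) (use ca cc C(2) in auto)
    moreover have "length a = L"
    proof -
      have "x \<noteq> []" "last x \<noteq> 0" using C(1,3) assms(1) by (auto simp: last_conv_nth)
      then show ?thesis unfolding a_def using strip_full assms(1) by simp
    qed
    ultimately show ?thesis using lens by (simp add: ord_add_def)
  next
    assume "CondB x y z L"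
    then obtain m where B: "m < L" "\<forall>i<m. z ! i = y ! i" "y ! m \<noteq> 0" "z ! m = x ! m + y ! m"
      "\<forall>i. m < i \<and> i < L \<longrightarrow> y ! i = 0 \<and> z ! i = x ! i"
      "m = L - 1 \<or> (y ! (L - 1) = 0 \<and> z ! (L - 1) = x ! (L - 1) \<and> x ! (L - 1) \<noteq> 0)"
      unfolding CondB_def by blast
    have cbm: "coef b m \<noteq> 0" using cb B(1,3) by simp
    then have mlb: "m < length b" by (simp add: coef_def split: if_splits)
    then have bne: "b \<noteq> []" by auto
    have lbm: "length b - 1 = m"
    proof (rule ccontr)
      assume "length b - 1 \<noteq> m"
      then have "m < length b - 1" using mlb by simp
      moreover have "last b \<noteq> 0" using codes(2) bne by (simp add: is_code_def)
      then have "coef b (length b - 1) \<noteq> 0" using last_coef[OF bne] by simp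
      moreover have "length b - 1 < L" using lens bne by (cases b) auto
      ultimately show False using cb B(5) by auto
    qed
    have eq: "ord_add a b = c"
    proof (rule code_eq[OF ord_add_code[OF codes(1,2)] codes(3)])
      fix i
      show "coef (ord_add a b) i = coef c i"
        unfolding coef_ord_add[OF bne] lbm using ca cb cc B(1,2,4,5) by auto
    qed
    have "L \<le> max (length a) (length b)"
    proof (cases "m = L - 1")
      case True
      then have "length b = L" using lbm B(1) mlb by linarith
      then show ?thesis by simp
    next
      case False
      then have "x ! (L - 1) \<noteq> 0" using B(6) by simp
      moreover have "x \<noteq> []" using B(1) assms(1) by auto
      ultimately have "x \<noteq> []" "last x \<noteq> 0" using assms(1) by (auto simp: last_conv_nth)
      then have "length a = L" unfolding a_def using strip_full assms(1) by simp
      then show ?thesis by simp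
    qed
    moreover have "length (ord_add a b) = max (length a) (length b)" using bne by (simp add: ord_add_len)
    then have "length c = max (length a) (length b)" using eq by simp
    ultimately show ?thesis using eq lens by simp
  qed
  show ?thesis unfolding AddRel_def
    using codes main pads by (intro CollectI exI[of _ a] exI[of _ b] exI[of _ c] exI[of _ L]) simp
qed



lemma upt_split3: assumes "m < L" shows "[0..<L] = [0..<m] @ m # [Suc m..<L]"
proof -
  have "[0..<L] = [0..<m] @ [m..<L]" using upt_add_eq_append[of 0 m "L - m"] assms by simp
  then show ?thesis using assms by (simp add: upt_conv_Cons)
qed

lemma decomp_iff:
  "(\<exists>p l r. map f [0..<L] = p @ l # r \<and> (\<forall>x\<in>set p. A x) \<and> B l \<and>
       (r = [] \<or> (r \<noteq> [] \<and> (\<forall>x\<in>set r. R x) \<and> RN (last r))))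
   \<longleftrightarrow> (\<exists>m<L. (\<forall>i<m. A (f i)) \<and> B (f m) \<and> (\<forall>i. m < i \<and> i < L \<longrightarrow> R (f i)) \<and>
       (m = L - 1 \<or> RN (f (L - 1))))"
proof
  assume "\<exists>p l r. map f [0..<L] = p @ l # r \<and> (\<forall>x\<in>set p. A x) \<and> B l \<and>
       (r = [] \<or> (r \<noteq> [] \<and> (\<forall>x\<in>set r. R x) \<and> RN (last r)))"
  then obtain p l r where h: "map f [0..<L] = p @ l # r" "\<forall>x\<in>set p. A x" "B l"
      "r = [] \<or> (r \<noteq> [] \<and> (\<forall>x\<in>set r. R x) \<and> RN (last r))" by blast
  define m where "m = length p"
  have len: "L = m + 1 + length r" using arg_cong[OF h(1), of length] m_def by simp
  have nth: "\<And>i. i < L \<Longrightarrow> f i = (p @ l # r) ! i"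
  proof -
    fix i assume "i < L"
    then have "f i = map f [0..<L] ! i" by simp
    then show "f i = (p @ l # r) ! i" using h(1) by simp
  qed
  show "\<exists>m<L. (\<forall>i<m. A (f i)) \<and> B (f m) \<and> (\<forall>i. m < i \<and> i < L \<longrightarrow> R (f i)) \<and>
       (m = L - 1 \<or> RN (f (L - 1)))"
  proof (intro exI[of _ m] conjI allI impI)
    show "m < L" using len by simp
    fix i assume "i < m" then show "A (f i)" using nth[of i] len h(2) m_def by (simp add: nth_append)
  next
    show "B (f m)" using nth[of m] len h(3) m_def by (simp add: nth_append)
  next
    fix i assume i: "m < i \<and> i < L"
    then have "f i = r ! (i - Suc m)" using nth[of i] m_def by (simp add: nth_append)
    moreover have "i - Suc m < length r" using i len by linarith
    ultimately have "f i \<in> set r" by simp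
    moreover have "r \<noteq> []" using i len by auto
    ultimately show "R (f i)" using h(4) by auto
  next
    show "m = L - 1 \<or> RN (f (L - 1))"
    proof (cases "r = []")
      case True then show ?thesis using len by simp
    next
      case False
      then have "f (L - 1) = last r" using nth[of "L - 1"] len m_def
        by (simp add: nth_append last_conv_nth)
      then show ?thesis using h(4) False by simp
    qed
  qed
next
  assume "\<exists>m<L. (\<forall>i<m. A (f i)) \<and> B (f m) \<and> (\<forall>i. m < i \<and> i < L \<longrightarrow> R (f i)) \<and>
       (m = L - 1 \<or> RN (f (L - 1)))"
  then obtain m where h: "m < L" "\<forall>i<m. A (f i)" "B (f m)" "\<forall>i. m < i \<and> i < L \<longrightarrow> R (f i)"
    "m = L - 1 \<or> RN (f (L - 1))" by blast
  have e1: "map f [0..<L] = map f [0..<m] @ f m # map f [Suc m..<L]"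
    using upt_split3[OF h(1)] by simp
  have e2: "\<forall>x\<in>set (map f [0..<m]). A x" using h(2) by auto
  have e3: "map f [Suc m..<L] = [] \<or> (map f [Suc m..<L] \<noteq> [] \<and> (\<forall>x\<in>set (map f [Suc m..<L]). R x) \<and> RN (last (map f [Suc m..<L])))"
  proof (cases "Suc m < L")
    case True
    then have "m \<noteq> L - 1" by simp
    then have "RN (f (L - 1))" using h(5) by simp
    moreover have "last (map f [Suc m..<L]) = f (L - 1)" using True by (simp add: last_map)
    moreover have "\<forall>x\<in>set (map f [Suc m..<L]). R x" using h(4) by auto
    ultimately show ?thesis using True by simp
  qed simp
  show "\<exists>p l r. map f [0..<L] = p @ l # r \<and> (\<forall>x\<in>set p. A x) \<and> B l \<and>
       (r = [] \<or> (r \<noteq> [] \<and> (\<forall>x\<in>set r. R x) \<and> RN (last r)))"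
    using e1 e2 h(3) e3 by blast
qed

definition "tl3 x y z i = [Some (x ! i), Some (y ! i), Some (z ! i)]"

lemma tl3_simps[simp]:
  "isA (tl3 x y z i) \<longleftrightarrow> z ! i = y ! i"
  "isB (tl3 x y z i) \<longleftrightarrow> y ! i \<noteq> 0 \<and> z ! i = x ! i + y ! i"
  "isR (tl3 x y z i) \<longleftrightarrow> y ! i = 0 \<and> z ! i = x ! i"
  "isRN (tl3 x y z i) \<longleftrightarrow> y ! i = 0 \<and> z ! i = x ! i \<and> x ! i \<noteq> 0"
  by (auto simp: tl3_def isA_def isB_def isR_def isRN_def)

lemma conv_eq: "length x = L \<Longrightarrow> length y = L \<Longrightarrow> length z = L \<Longrightarrow> conv [x, y, z] = map (tl3 x y z) [0..<L]"
  by (simp add: conv_def conv_len_def tl3_def)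

lemma conv_len3: "u \<in> set (conv w) \<Longrightarrow> length u = length w"
  by (auto simp: conv_def)

lemma acc0': "\<forall>u\<in>set us. length u = 3 \<Longrightarrow>
  accf EE TT 0 us \<longleftrightarrow> (\<exists>p l r. us = p @ l # r \<and> (\<forall>x\<in>set p. isA x) \<and> isB l \<and>
     (r = [] \<or> (r \<noteq> [] \<and> (\<forall>x\<in>set r. isR x) \<and> isRN (last r))))"
proof -
  assume a: "\<forall>u\<in>set us. length u = 3"
  have "\<And>p l r. us = p @ l # r \<Longrightarrow> (accf EE TT 2 r \<longleftrightarrow> (r \<noteq> [] \<and> (\<forall>x\<in>set r. isR x) \<and> isRN (last r)))"
    using a by (intro acc2) auto
  note H = this
  show ?thesis unfolding acc0[OF a]
  proof
    assume "\<exists>p l r. us = p @ l # r \<and> (\<forall>x\<in>set p. isA x) \<and> isB l \<and> (r = [] \<or> accf EE TT 2 r)"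
    then obtain p l r where h: "us = p @ l # r" "\<forall>x\<in>set p. isA x" "isB l" "r = [] \<or> accf EE TT 2 r" by blast
    have "r = [] \<or> (r \<noteq> [] \<and> (\<forall>x\<in>set r. isR x) \<and> isRN (last r))" using h(4) H[OF h(1)] by blast
    then show "\<exists>p l r. us = p @ l # r \<and> (\<forall>x\<in>set p. isA x) \<and> isB l \<and>
     (r = [] \<or> (r \<noteq> [] \<and> (\<forall>x\<in>set r. isR x) \<and> isRN (last r)))" using h(1-3) by blast
  next
    assume "\<exists>p l r. us = p @ l # r \<and> (\<forall>x\<in>set p. isA x) \<and> isB l \<and>
     (r = [] \<or> (r \<noteq> [] \<and> (\<forall>x\<in>set r. isR x) \<and> isRN (last r)))"
    then obtain p l r where h: "us = p @ l # r" "\<forall>x\<in>set p. isA x" "isB l"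
      "r = [] \<or> (r \<noteq> [] \<and> (\<forall>x\<in>set r. isR x) \<and> isRN (last r))" by blast
    have "r = [] \<or> accf EE TT 2 r" using h(4) H[OF h(1)] by blast
    then show "\<exists>p l r. us = p @ l # r \<and> (\<forall>x\<in>set p. isA x) \<and> isB l \<and> (r = [] \<or> accf EE TT 2 r)"
      using h(1-3) by blast
  qed
qed

lemma acc_char:
  assumes "length x = L" "length y = L" "length z = L"
  shows "(\<exists>q\<in>II. accf EE TT q (conv [x, y, z])) \<longleftrightarrow> (L = 0 \<or> CondB x y z L \<or> CondC x y z L)"
proof -
  let ?us = "map (tl3 x y z) [0..<L]"
  have us: "conv [x, y, z] = ?us" using conv_eq assms by simp
  have l3: "\<forall>u\<in>set ?us. length u = 3" by (auto simp: tl3_def)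
  have "(\<exists>q\<in>II. accf EE TT q ?us) \<longleftrightarrow> accf EE TT 0 ?us \<or> accf EE TT 2 ?us \<or> accf EE TT 4 ?us"
    by (simp add: II_def)
  also have "accf EE TT 4 ?us \<longleftrightarrow> L = 0" by (simp add: acc4)
  also have "accf EE TT 2 ?us \<longleftrightarrow> CondC x y z L"
  proof -
    have "accf EE TT 2 ?us \<longleftrightarrow> (?us \<noteq> [] \<and> (\<forall>u\<in>set ?us. isR u) \<and> isRN (last ?us))"
      using acc2[OF l3] .
    also have "\<dots> \<longleftrightarrow> CondC x y z L"
    proof (cases "L = 0")
      case False
      then have "last ?us = tl3 x y z (L - 1)" by (simp add: last_map)
      then show ?thesis using False unfolding CondC_def by auto
    qed (simp add: CondC_def)
    finally show ?thesis .
  qed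
  also have "accf EE TT 0 ?us \<longleftrightarrow> CondB x y z L"
    unfolding acc0'[OF l3] decomp_iff CondB_def by simp
  finally show ?thesis using us by auto
qed

definition "full u = (\<exists>a b c. u = [Some a, Some b, Some c])"

lemma acc_full:
  assumes "\<forall>u\<in>set us. length u = 3" "\<exists>q\<in>II. accf EE TT q us"
  shows "\<forall>u\<in>set us. full u"
proof -
  have fA: "\<And>u. isA u \<Longrightarrow> full u" by (auto simp: isA_def full_def)
  have fB: "\<And>u. isB u \<Longrightarrow> full u" by (auto simp: isB_def full_def)
  have fR: "\<And>u. isR u \<Longrightarrow> full u" by (auto simp: isR_def full_def)
  from assms(2) consider "accf EE TT 0 us" | "accf EE TT 2 us" | "accf EE TT 4 us" by (auto simp: II_def)
  then show ?thesis
  proof cases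
    case 1
    then obtain p l r where "us = p @ l # r" "\<forall>x\<in>set p. isA x" "isB l"
      "r = [] \<or> (r \<noteq> [] \<and> (\<forall>x\<in>set r. isR x) \<and> isRN (last r))"
      using acc0'[OF assms(1)] by blast
    then have "set us = set p \<union> {l} \<union> set r" by auto
    moreover have "\<forall>u\<in>set p. full u" using \<open>\<forall>x\<in>set p. isA x\<close> fA by blast
    moreover have "\<forall>u\<in>set r. full u"
      using \<open>r = [] \<or> (r \<noteq> [] \<and> (\<forall>x\<in>set r. isR x) \<and> isRN (last r))\<close> fR by auto
    moreover have "full l" using fB \<open>isB l\<close> by blast
    ultimately show ?thesis by blast
  next
    case 2 then show ?thesis using acc2[OF assms(1)] fR by auto
  next
    case 3 then show ?thesis using acc4 by simp
  qed
qed

lemma full_len: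
  assumes "\<forall>u\<in>set (conv [x, y, z]). full u"
  shows "length y = length x \<and> length z = length x"
proof -
  define n where "n = conv_len [x, y, z]"
  have n: "n = max (length x) (max (length y) (length z))"
    unfolding n_def conv_len_def by (simp add: max.commute max.left_commute)
  have ge: "\<And>v. v \<in> {x, y, z} \<Longrightarrow> n \<le> length v"
  proof -
    fix v assume v: "v \<in> {x, y, z}"
    show "n \<le> length v"
    proof (cases "n = 0")
      case False
      then have "n - 1 < length (conv [x, y, z])" by (simp add: conv_def n_def)
      then have "conv [x, y, z] ! (n - 1) \<in> set (conv [x, y, z])" by simp
      then have "full (conv [x, y, z] ! (n - 1))" using assms by blast
      moreover have "conv [x, y, z] ! (n - 1) =
        map (\<lambda>w. if n - 1 < length w then Some (w ! (n - 1)) else None) [x, y, z]"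
        using False by (simp add: conv_def n_def)
      ultimately have "n - 1 < length x" "n - 1 < length y" "n - 1 < length z"
        by (auto simp: full_def split: if_splits)
      then show ?thesis using v by auto
    qed simp
  qed
  then have "n \<le> length x" "n \<le> length y" "n \<le> length z" by auto
  moreover have "length x \<le> n" "length y \<le> n" "length z \<le> n" using n by simp_all
  ultimately show ?thesis by linarith
qed

lemma list3: "length w = 3 \<Longrightarrow> \<exists>x y z. w = [x, y, z]"
  by (auto simp: numeral_3_eq_3 length_Suc_conv)

theorem proposition5p6:
  shows "M_recognizable 3 AddRel"
proof -
  have f: "finite EE" "finite II" "finite TT" by (simp_all add: EE_def II_def TT_def)
  have "AddRel = {w. length w = 3 \<and> accepts EE II TT w}"
  proof (rule set_eqI, rule iffI)
    fix w assume w: "w \<in> AddRel"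
    then obtain x y z where xyz: "w = [x, y, z]" unfolding AddRel_def by blast
    have "length y = length x \<and> length z = length x \<and> (length x = 0 \<or> CondB x y z (length x) \<or> CondC x y z (length x))"
      using addrel_fwd[of x y z "length x"] w xyz by simp
    then have "\<exists>q\<in>II. accf EE TT q (conv [x, y, z])" using acc_char[of x "length x" y z] by simp
    then show "w \<in> {w. length w = 3 \<and> accepts EE II TT w}" using xyz accepts_iff by simp
  next
    fix w assume "w \<in> {w. length w = 3 \<and> accepts EE II TT w}"
    then have w: "length w = 3" "\<exists>q\<in>II. accf EE TT q (conv w)" using accepts_iff by auto
    obtain x y z where xyz: "w = [x, y, z]" using list3[OF w(1)] by blast
    have l3: "\<forall>u\<in>set (conv w). length u = 3"
    proof
      fix u assume "u \<in> set (conv w)" then show "length u = 3" using conv_len3 w(1) by simp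
    qed
    have "\<forall>u\<in>set (conv [x, y, z]). full u" using acc_full[OF l3 w(2)] xyz by simp
    then have lens: "length y = length x" "length z = length x" using full_len by blast+
    then have "length x = 0 \<or> CondB x y z (length x) \<or> CondC x y z (length x)"
      using acc_char[of x "length x" y z] w(2) xyz by simp
    then show "w \<in> AddRel" using addrel_bwd[of x "length x" y z] lens xyz by simp
  qed
  then show ?thesis unfolding M_recognizable_def using f fv_ok by blast
qed

end
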